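(* Let $a_0=0$ and let $a_1<a_2<\cdots$ be the increasing enumeration of $\{m\ge1:\ c_m=1\}$. Then $$\liminf_{n\to\infty}\frac{a_n}{n^2}=\frac16,\qquad \limsup_{n\to\infty}\frac{a_n}{n^2}=\frac12,$$ and the set $\left\{\frac{a_n}{n^2}:\ n\ge1\right\}$ is dense (in the Euclidean topology) in the interval $\left[\frac16,\frac12\right]$.
   Context: For $n\in\mathbb{N}$ let $s_2(n)$ be the sum of the binary digits of $n$ and $t_n=s_2(n)\bmod 2$ (the Prouhet–Thue–Morse sequence). Let $F(X)=\sum_{n\ge1}t_nX^n\in\mathbb{F}_2[[X]]$ and let $G(X)=\sum_{n\ge1}c_nX^n\in\mathbb{F}_2[[X]]$ be its compositional inverse, i.e. $F(G(X))=G(F(X))=X$. The $c_n$ are identified with integers in $\{0,1\}$. *)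

theory Defs
  imports "HOL-Analysis.Analysis" "HOL-Library.Z2" "HOL-Computational_Algebra.Formal_Power_Series"
begin

fun s2 :: "nat \<Rightarrow> nat" where
  "s2 n = (if n = 0 then 0 else n mod 2 + s2 (n div 2))"

definition tm :: "nat \<Rightarrow> bit" where
  "tm n = of_nat (s2 n mod 2)"

definition TM_F :: "bit fps" where
  "TM_F = Abs_fps (\<lambda>n. if n = 0 then 0 else tm n)"

end

theory Submission
  imports Defs
begin


fun spr :: "nat \<Rightarrow> nat" where
  "spr n = (if n = 0 then 0 else 4 * spr (n div 2) + n mod 2)"
declare spr.simps[simp del]

lemma spr_0[simp]: "spr 0 = 0" by (simp add: spr.simps)
lemma spr_even[simp]: "spr (2*m) = 4 * spr m"
  by (subst spr.simps) auto
lemma spr_odd[simp]: "spr (Suc (2*m)) = 4 * spr m + 1"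
  by (subst spr.simps) auto

lemma spr_1[simp]: "spr (Suc 0) = 1" using spr_odd[of 0] by simp

lemma spr_le: "spr j \<le> j^2"
proof (induction j rule: nat_bit_induct)
  case zero then show ?case by simp
next
  case (even n) then show ?case by (simp add: power2_eq_square)
next
  case (odd n) then show ?case by (simp add: power2_eq_square)
qed

lemma spr_ge: "j^2 + 2*j \<le> 3 * spr j"
proof (induction j rule: nat_bit_induct)
  case zero then show ?case by simp
next
  case (even n) then show ?case unfolding spr_even by (simp add: power2_eq_square algebra_simps)
next
  case (odd n) then show ?case unfolding spr_odd by (simp add: power2_eq_square algebra_simps)
qed

lemma spr_Suc: "spr j < spr (Suc j)"
proof (induction j rule: nat_bit_induct)
  case zero then show ?case by simp
next
  case (even n) then show ?case by simp
next
  case (odd n)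
  have "Suc (Suc (2*n)) = 2 * Suc n" by simp
  then show ?case using odd by (simp only: spr_even spr_odd)
qed

lemma spr_mono: "i < j \<Longrightarrow> spr i < spr j"
  by (induction j) (auto intro: less_trans spr_Suc simp: less_Suc_eq)

lemma spr_pow: "spr (2^k) = 4^k"
  by (induction k) (auto simp: power_Suc)

lemma spr_pow1: "3 * spr (2^k - 1) + 1 = 4^k"
proof (induction k)
  case 0 then show ?case by simp
next
  case (Suc k)
  obtain m where m: "(2::nat)^k = Suc m" using not0_implies_Suc[of "(2::nat)^k"] by auto
  have "(2::nat)^Suc k - 1 = Suc (2 * (2^k - 1))" using m by simp
  then show ?case using Suc by (simp add: power_Suc)
qed



lemma bit_add_self[simp]: "(x::bit) + x = 0" by (cases x) simp_all
lemma bit_mult_self[simp]: "(x::bit) * x = x" by (cases x) simp_all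

lemma sum_sym_bit:
  fixes g :: "nat \<Rightarrow> bit"
  assumes sym: "\<And>i. i \<le> n \<Longrightarrow> g (n - i) = g i"
  shows "(\<Sum>i=0..n. g i) = (if even n then g (n div 2) else 0)"
proof -
  let ?A = "{i. 2*i < n}" and ?B = "{i. i \<le> n \<and> n < 2*i}" and ?C = "{i. 2*i = n}"
  have fA: "finite ?A" by (rule finite_subset[of _ "{..<n}"]) auto
  have fB: "finite ?B" by (rule finite_subset[of _ "{..n}"]) auto
  have fC: "finite ?C" by (rule finite_subset[of _ "{..n}"]) auto
  have split: "{0..n} = ?A \<union> ?B \<union> ?C" by auto
  have d1: "sum g (?A \<union> ?B \<union> ?C) = sum g (?A \<union> ?B) + sum g ?C"
    by (rule sum.union_disjoint) (use fA fB fC in auto)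
  have d2: "sum g (?A \<union> ?B) = sum g ?A + sum g ?B"
    by (rule sum.union_disjoint) (use fA fB fC in auto)
  have "(\<Sum>i=0..n. g i) = sum g ?A + sum g ?B + sum g ?C"
    unfolding split d1 d2 ..
  moreover have "sum g ?B = sum g ?A"
    by (rule sum.reindex_bij_witness[where i="\<lambda>i. n - i" and j="\<lambda>i. n - i"])
       (auto simp: sym)
  moreover have "sum g ?C = (if even n then g (n div 2) else 0)"
  proof (cases "even n")
    case True
    then have "?C = {n div 2}" by auto
    then show ?thesis using True by simp
  next
    case False
    then have "?C = {}" by auto
    then show ?thesis using False by simp
  qed
  ultimately show ?thesis by (simp only: bit_add_self add_0_left)
qed

lemma sq_nth: "fps_nth ((f::bit fps)^2) n = (if even n then fps_nth f (n div 2) else 0)"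
proof -
  have "fps_nth (f^2) n = (\<Sum>i=0..n. fps_nth f i * fps_nth f (n-i))" by (simp add: power2_eq_square fps_mult_nth)
  also have "\<dots> = (if even n then fps_nth f (n div 2) * fps_nth f (n - n div 2) else 0)"
    by (rule sum_sym_bit) (simp add: mult.commute)
  also have "\<dots> = (if even n then fps_nth f (n div 2) else 0)"
    by (auto elim!: evenE)
  finally show ?thesis .
qed

lemma pow4_nth: "fps_nth ((f::bit fps)^4) n = (if 4 dvd n then fps_nth f (n div 4) else 0)"
proof -
  have e: "n div 2 div 2 = n div 4" by (simp add: div_mult2_eq[symmetric])
  have d: "even n \<and> even (n div 2) \<longleftrightarrow> 4 dvd n" by presburger
  have "fps_nth (f^4) n = fps_nth ((f^2)^2) n" by (simp flip: power_mult)
  also have "\<dots> = (if even n \<and> even (n div 2) then fps_nth f (n div 2 div 2) else 0)"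
    by (simp only: sq_nth) simp
  finally show ?thesis using e d by simp
qed

lemma onepX_nth: "fps_nth ((1 + fps_X) * (f::bit fps)) n = fps_nth f n + (if n = 0 then 0 else fps_nth f (n - 1))"
  by (simp add: distrib_right)



declare s2.simps[simp del]

lemma s2_even[simp]: "s2 (2*k) = s2 k" by (subst s2.simps) (auto simp: s2.simps[of 0])
lemma s2_odd[simp]: "s2 (Suc (2*k)) = Suc (s2 k)" by (subst s2.simps) auto
lemma s2_0[simp]: "s2 0 = 0" by (simp add: s2.simps)

lemma of_nat_mod2_bit: "(of_nat (m mod 2) :: bit) = of_nat m"
proof -
  have "(of_nat m :: bit) = of_nat (2 * (m div 2) + m mod 2)" by simp
  also have "\<dots> = of_nat (m mod 2)" by (simp only: of_nat_add of_nat_mult) simp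
  finally show ?thesis by simp
qed

lemma tm_eq: "tm n = of_nat (s2 n)" by (simp add: tm_def of_nat_mod2_bit)

lemma TM_nth: "fps_nth TM_F n = tm n"
  by (simp add: TM_F_def tm_eq)

definition Dodd :: "bit fps" where "Dodd = Abs_fps (\<lambda>n. if odd n then 1 else 0)"

lemma TD: "(1 + fps_X) * TM_F^2 = TM_F + Dodd"
proof (rule fps_ext)
  fix n :: nat
  have "\<exists>k. n = 2*k \<or> n = Suc (2*k)" by presburger
  then obtain k where k: "n = 2*k \<or> n = Suc (2*k)" by blast
  show "fps_nth ((1 + fps_X) * TM_F^2) n = fps_nth (TM_F + Dodd) n"
  proof (cases "n = 2*k")
    case True
    then show ?thesis
      by (cases "k = 0") (auto simp: onepX_nth sq_nth TM_nth Dodd_def tm_eq)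
  next
    case False
    then have n: "n = Suc (2*k)" using k by auto
    show ?thesis unfolding n
      by (simp add: onepX_nth sq_nth TM_nth Dodd_def tm_eq)
  qed
qed

lemma onepX2_nth: "fps_nth ((1 + fps_X) * ((1 + fps_X) * (f::bit fps))) n
   = fps_nth f n + (if n < 2 then 0 else fps_nth f (n - 2))"
proof -
  consider "n = 0" | "n = 1" | "n \<ge> 2" by linarith
  then show ?thesis
  proof cases
    case 3
    then have "n - 1 \<noteq> 0" "n - 1 - 1 = n - 2" by auto
    then show ?thesis unfolding onepX_nth using 3
      by (cases "fps_nth f n"; cases "fps_nth f (n-1)"; cases "fps_nth f (n-2)") simp_all
  qed (simp_all add: onepX_nth)
qed

lemma XD: "(1 + fps_X) * ((1 + fps_X) * Dodd) = fps_X"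
proof (rule fps_ext)
  fix n :: nat
  show "fps_nth ((1 + fps_X) * ((1 + fps_X) * Dodd)) n = fps_nth fps_X n"
    unfolding onepX2_nth by (auto simp: Dodd_def; presburger)
qed

lemma TMeq: "(1 + fps_X)^3 * TM_F^2 = (1 + fps_X)^2 * TM_F + fps_X"
proof -
  have "(1 + fps_X)^3 * TM_F^2 = (1 + fps_X) * ((1 + fps_X) * ((1 + fps_X) * TM_F^2))"
    by (simp add: power3_eq_cube mult.assoc)
  also have "\<dots> = (1 + fps_X) * ((1 + fps_X) * TM_F) + (1 + fps_X) * ((1 + fps_X) * Dodd)"
    unfolding TD by (simp add: distrib_left)
  also have "\<dots> = (1 + fps_X)^2 * TM_F + fps_X" unfolding XD by (simp add: power2_eq_square mult.assoc)
  finally show ?thesis .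
qed

lemma two_fps_bit: "(2 :: bit fps) = 0"
  by (rule fps_ext) (simp add: fps_numeral_nth)

lemma G_eq1:
  fixes G :: "bit fps"
  assumes G0: "fps_nth G 0 = 0" and inv1: "fps_compose TM_F G = fps_X"
  shows "(1 + G)^3 * fps_X^2 = (1 + G)^2 * fps_X + G"
proof -
  have c1: "(1 + fps_X) oo G = 1 + G"
    using G0 by (simp add: fps_compose_add_distrib)
  have "((1 + fps_X)^3 * TM_F^2) oo G = ((1 + fps_X)^2 * TM_F + fps_X) oo G"
    using TMeq by simp
  then show ?thesis
    using G0 inv1 c1
    by (simp add: fps_compose_mult_distrib fps_compose_add_distrib fps_compose_power[symmetric])
qed

lemma G_cube:
  fixes G :: "bit fps"
  assumes G0: "fps_nth G 0 = 0" and inv1: "fps_compose TM_F G = fps_X"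
  shows "(fps_X * (1 + G) + 1)^3 = 1 + fps_X"
proof -
  have e: "(1 + G)^3 * fps_X^2 - ((1 + G)^2 * fps_X + G) = 0" using G_eq1[OF assms] by simp
  have "(fps_X * (1 + G) + 1)^3 - (1 + fps_X) =
     fps_X * ((1 + G)^3 * fps_X^2 - ((1 + G)^2 * fps_X + G))
     + 2 * (2 * (fps_X * (1 + G))^2 + 2 * (fps_X * (1 + G)) - fps_X)"
    by algebra
  then have "(fps_X * (1 + G) + 1)^3 - (1 + fps_X) = 0" unfolding e two_fps_bit by simp
  then show ?thesis by simp
qed

definition Rset :: "nat set" where "Rset = range (\<lambda>j. 2 * spr j)"

lemma R_rec: "n \<in> Rset \<longleftrightarrow> (n mod 4 = 0 \<or> n mod 4 = 2) \<and> n div 4 \<in> Rset"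
proof
  assume "n \<in> Rset"
  then obtain j where j: "n = 2 * spr j" by (auto simp: Rset_def)
  have "\<exists>m. j = 2*m \<or> j = Suc (2*m)" by presburger
  then obtain m where m: "j = 2*m \<or> j = Suc (2*m)" by blast
  then show "(n mod 4 = 0 \<or> n mod 4 = 2) \<and> n div 4 \<in> Rset"
  proof
    assume "j = 2*m"
    then have "n = 4 * (2 * spr m)" using j by simp
    then show ?thesis by (auto simp: Rset_def)
  next
    assume "j = Suc (2*m)"
    then have nn: "n = 4 * (2 * spr m) + 2" using j by simp
    have "n mod 4 = 2" "n div 4 = 2 * spr m" using nn by presburger+
    then show ?thesis by (auto simp: Rset_def)
  qed
next
  assume a: "(n mod 4 = 0 \<or> n mod 4 = 2) \<and> n div 4 \<in> Rset"
  then obtain j where j: "n div 4 = 2 * spr j" by (auto simp: Rset_def)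
  have n: "n = 4 * (n div 4) + n mod 4" by simp
  from a show "n \<in> Rset"
  proof (elim conjE disjE)
    assume "n mod 4 = 0"
    then have "n = 2 * spr (2*j)" using n j by simp
    then show ?thesis unfolding Rset_def by blast
  next
    assume "n mod 4 = 2"
    then have "n = 2 * spr (Suc (2*j))" using n j by simp
    then show ?thesis unfolding Rset_def by blast
  qed
qed

lemma R_even: "n \<in> Rset \<Longrightarrow> even n" by (auto simp: Rset_def)
lemma R_0: "0 \<in> Rset" by (auto simp: Rset_def intro: range_eqI[of _ _ 0])

definition PP :: "bit fps" where "PP = Abs_fps (\<lambda>n. if n \<in> Rset then 1 else 0)"

lemma PP_eq: "PP = (1 + fps_X) * ((1 + fps_X) * PP^4)"
proof (rule fps_ext)
  fix n :: nat
  have cs: "n mod 4 = 0 \<or> n mod 4 = 1 \<or> n mod 4 = 2 \<or> n mod 4 = 3" by arith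
  have r: "n \<in> Rset \<longleftrightarrow> (n mod 4 = 0 \<or> n mod 4 = 2) \<and> n div 4 \<in> Rset" by (rule R_rec)
  show "fps_nth PP n = fps_nth ((1 + fps_X) * ((1 + fps_X) * PP^4)) n"
    unfolding onepX2_nth pow4_nth
  proof -
    from cs show "fps_nth PP n = (if 4 dvd n then fps_nth PP (n div 4) else 0) +
    (if n < 2 then 0 else if 4 dvd n - 2 then fps_nth PP ((n - 2) div 4) else 0)"
    proof (elim disjE)
      assume h: "n mod 4 = 0"
      then have "4 dvd n" "n < 2 \<or> \<not> 4 dvd (n - 2)" by presburger+
      then show ?thesis using h r by (auto simp: PP_def)
    next
      assume h: "n mod 4 = 2"
      then have "\<not> 4 dvd n" "\<not> n < 2" "4 dvd (n - 2)" "(n - 2) div 4 = n div 4" by presburger+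
      then show ?thesis using h r by (auto simp: PP_def)
    next
      assume h: "n mod 4 = 1"
      then have "\<not> 4 dvd n" "n < 2 \<or> \<not> 4 dvd (n - 2)" by presburger+
      then show ?thesis using h r by (auto simp: PP_def)
    next
      assume h: "n mod 4 = 3"
      then have "\<not> 4 dvd n" "n < 2 \<or> \<not> 4 dvd (n - 2)" by presburger+
      then show ?thesis using h r by (auto simp: PP_def)
    qed
  qed
qed

lemma PP0: "fps_nth PP 0 = 1" by (simp add: PP_def R_0)

lemma PP_cube: "((1 + fps_X) * PP)^3 = 1 + fps_X"
proof -
  have "PP * ((1 + fps_X)^2 * PP^3 - 1) = 0"
  proof -
    have "PP * ((1 + fps_X)^2 * PP^3 - 1) = (1 + fps_X) * ((1 + fps_X) * PP^4) - PP"
      by algebra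
    then show ?thesis using PP_eq by simp
  qed
  moreover have "PP \<noteq> 0" using PP0 by auto
  ultimately have h: "(1 + fps_X)^2 * PP^3 = 1" by simp
  have "((1 + fps_X) * PP)^3 = (1 + fps_X) * ((1 + fps_X)^2 * PP^3)" by algebra
  then show ?thesis using h by simp
qed

lemma cube_uniq:
  fixes a b :: "bit fps"
  assumes a0: "fps_nth a 0 = 1" and b0: "fps_nth b 0 = 1" and e: "a^3 = b^3"
  shows "a = b"
proof -
  have "(a - b) * (a^2 + a*b + b^2) = a^3 - b^3" by algebra
  then have z: "(a - b) * (a^2 + a*b + b^2) = 0" using e by simp
  have "fps_nth (a^2 + a*b + b^2) 0 = 1" using a0 b0 by (simp add: power2_eq_square)
  then have "a^2 + a*b + b^2 \<noteq> 0" by (metis fps_zero_nth zero_neq_one)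
  with z show ?thesis by simp
qed

lemma G_nth:
  fixes G :: "bit fps"
  assumes G0: "fps_nth G 0 = 0" and inv1: "fps_compose TM_F G = fps_X" and n: "n \<ge> 1"
  shows "fps_nth G n = fps_nth PP (Suc n) + fps_nth PP n"
proof -
  have "fps_X * (1 + G) + 1 = (1 + fps_X) * PP"
    by (rule cube_uniq) (use G_cube[OF G0 inv1] PP_cube PP0 in simp_all)
  then have "fps_nth (fps_X * (1 + G) + 1) (Suc n) = fps_nth ((1 + fps_X) * PP) (Suc n)" by simp
  moreover have "fps_nth (fps_X * (1 + G) + 1) (Suc n) = fps_nth G n" using n by simp
  moreover have "fps_nth ((1 + fps_X) * PP) (Suc n) = fps_nth PP (Suc n) + fps_nth PP n"
    by (simp only: onepX_nth) simp
  ultimately show ?thesis by simp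
qed

lemma G_char:
  fixes G :: "bit fps"
  assumes G0: "fps_nth G 0 = 0" and inv1: "fps_compose TM_F G = fps_X" and n: "n \<ge> 1"
  shows "fps_nth G n = 1 \<longleftrightarrow> n \<in> Rset \<or> Suc n \<in> Rset"
proof -
  have "\<not> (n \<in> Rset \<and> Suc n \<in> Rset)" using R_even[of n] R_even[of "Suc n"] by auto
  then show ?thesis unfolding G_nth[OF assms]
    by (cases "n \<in> Rset"; cases "Suc n \<in> Rset") (simp_all add: PP_def)
qed



definition fe :: "nat \<Rightarrow> nat" where
  "fe k = 2 * spr (k div 2 + 1) - 1 + k mod 2"

lemma spr_pos: "j \<ge> 1 \<Longrightarrow> spr j \<ge> 1"
  using spr_mono[of 0 j] by simp

lemma fe_even: "fe (2*i) = 2 * spr (Suc i) - 1" by (simp add: fe_def)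
lemma fe_odd: "fe (Suc (2*i)) = 2 * spr (Suc i)" 
  using spr_pos[of "Suc i"] by (simp add: fe_def)

lemma fe_range: "{m. m \<ge> 1 \<and> (m \<in> Rset \<or> Suc m \<in> Rset)} = range fe"
proof (intro equalityI subsetI)
  fix m assume "m \<in> {m. m \<ge> 1 \<and> (m \<in> Rset \<or> Suc m \<in> Rset)}"
  then have m1: "m \<ge> 1" and mr: "m \<in> Rset \<or> Suc m \<in> Rset" by auto
  from mr show "m \<in> range fe"
  proof
    assume "m \<in> Rset"
    then obtain j where j: "m = 2 * spr j" by (auto simp: Rset_def)
    with m1 have "j \<noteq> 0" by (cases j) auto
    then obtain i where "j = Suc i" by (cases j) auto
    then have "m = fe (Suc (2*i))" using j fe_odd by simp
    then show ?thesis by blast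
  next
    assume "Suc m \<in> Rset"
    then obtain j where j: "Suc m = 2 * spr j" by (auto simp: Rset_def)
    then have "j \<noteq> 0" by (cases j) auto
    then obtain i where "j = Suc i" by (cases j) auto
    then have "m = fe (2*i)" using j fe_even by simp
    then show ?thesis by blast
  qed
next
  fix m assume "m \<in> range fe"
  then obtain k where k: "m = fe k" by auto
  have "\<exists>i. k = 2*i \<or> k = Suc (2*i)" by presburger
  then obtain i where "k = 2*i \<or> k = Suc (2*i)" by blast
  then show "m \<in> {m. m \<ge> 1 \<and> (m \<in> Rset \<or> Suc m \<in> Rset)}"
  proof
    assume "k = 2*i"
    then have "m = 2 * spr (Suc i) - 1" using k fe_even by simp
    moreover have "spr (Suc i) \<ge> 1" by (rule spr_pos) simp
    ultimately have "m \<ge> 1" "Suc m = 2 * spr (Suc i)" by auto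
    then show ?thesis unfolding Rset_def by blast
  next
    assume "k = Suc (2*i)"
    then have "m = 2 * spr (Suc i)" using k fe_odd by simp
    moreover have "spr (Suc i) \<ge> 1" by (rule spr_pos) simp
    ultimately have "m \<ge> 1" "m = 2 * spr (Suc i)" by auto
    then show ?thesis unfolding Rset_def by blast
  qed
qed

lemma fe_mono: "strict_mono fe"
proof (rule strict_mono_Suc_iff[THEN iffD2], intro allI)
  fix k
  have "\<exists>i. k = 2*i \<or> k = Suc (2*i)" by presburger
  then obtain i where "k = 2*i \<or> k = Suc (2*i)" by blast
  then show "fe k < fe (Suc k)"
  proof
    assume "k = 2*i"
    then show ?thesis using fe_even[of i] fe_odd[of i] spr_pos[of "Suc i"] by simp
  next
    assume k: "k = Suc (2*i)"
    have "Suc k = 2 * Suc i" using k by simp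
    then have "fe (Suc k) = 2 * spr (Suc (Suc i)) - 1" using fe_even[of "Suc i"] by simp
    moreover have "spr (Suc i) < spr (Suc (Suc i))" by (rule spr_Suc)
    ultimately show ?thesis using k fe_odd[of i] by simp
  qed
qed

lemma enumerate_eq_strict_mono:
  fixes f :: "nat \<Rightarrow> nat"
  assumes sm: "strict_mono f" and S: "S = range f"
  shows "infinite S" "enumerate S n = f n"
proof -
  show inf: "infinite S" using S sm strict_mono_imp_inj_on range_inj_infinite by blast
  show "enumerate S n = f n"
  proof (induction n)
    case 0
    show ?case unfolding enumerate_0
      by (rule Least_equality) (use S sm in \<open>auto simp: strict_mono_less_eq\<close>)
  next
    case (Suc n)
    show ?case unfolding enumerate_Suc''[OF inf] Suc
    proof (rule Least_equality)
      show "f (Suc n) \<in> S \<and> f n < f (Suc n)" using S sm by (auto simp: strict_mono_def)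
    next
      fix y assume "y \<in> S \<and> f n < y"
      then obtain m where m: "y = f m" "f n < f m" using S by auto
      then have "n < m" using sm by (simp add: strict_mono_less)
      then show "f (Suc n) \<le> y" using m sm by (simp add: strict_mono_less_eq)
    qed
  qed
qed

lemma dIVT:
  fixes y :: "nat \<Rightarrow> real"
  assumes y0: "y 0 \<ge> v" and st: "\<And>i. i < N \<Longrightarrow> y (Suc i) \<ge> y i - d"
    and yN: "y N \<le> v + d"
  shows "\<exists>i\<le>N. \<bar>y i - v\<bar> \<le> d"
proof (cases "\<forall>i\<le>N. y i \<ge> v")
  case True
  then show ?thesis using yN by (intro exI[of _ N]) auto
next
  case False
  define m where "m = (LEAST i. i \<le> N \<and> y i < v)"
  have ex: "\<exists>i. i \<le> N \<and> y i < v" using False by auto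
  have m1: "m \<le> N \<and> y m < v" unfolding m_def by (rule LeastI_ex[OF ex])
  have m2: "\<And>i. i < m \<Longrightarrow> y i \<ge> v"
    using m1 not_less_Least[of _ "\<lambda>i. i \<le> N \<and> y i < v"] unfolding m_def[symmetric] by force
  have "m \<noteq> 0"
  proof
    assume "m = 0"
    with m1 y0 show False by simp
  qed
  then obtain p where p: "m = Suc p" by (cases m) auto
  have "y m \<ge> y p - d" using st[of p] m1 p by auto
  moreover have "y p \<ge> v" using m2[of p] p by auto
  ultimately show ?thesis using m1 by (intro exI[of _ m]) auto
qed

lemma step_ineq:
  fixes j s s' :: real
  assumes j: "1 \<le> j" and s0: "0 \<le> s" and sj: "s \<le> j^2" and ss: "s \<le> s'"
  shows "s/(2*j^2) - s'/(2*(j+1)^2) \<le> 1/j"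
proof -
  have j0: "j \<noteq> 0" "j + 1 \<noteq> 0" using j by auto
  have A: "j^2 \<noteq> 0" "(j+1)^2 \<noteq> 0" using j by auto
  have "s/(2*(j+1)^2) \<le> s'/(2*(j+1)^2)" using ss by (intro divide_right_mono) auto
  moreover have "s/(2*j^2) - s/(2*(j+1)^2) = s*(2*j+1)/(2*j^2*(j+1)^2)"
    using A by (simp add: field_simps) (simp add: algebra_simps power2_eq_square)
  moreover have "s*(2*j+1)/(2*j^2*(j+1)^2) \<le> j^2*(2*j+1)/(2*j^2*(j+1)^2)"
    using sj j by (intro divide_right_mono mult_right_mono) auto
  moreover have "j^2*(2*j+1)/(2*j^2*(j+1)^2) = (2*j+1)/(2*(j+1)^2)"
    using A by (simp add: field_simps)
  moreover have "(2*j+1)/(2*(j+1)^2) \<le> 1/j"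
  proof -
    have "2*(j+1)^2 - (2*j+1)*j = 3*j + 2" by (simp add: power2_eq_square algebra_simps)
    then have h: "(2*j+1)*j \<le> 2*(j+1)^2" using j by linarith
    have p: "0 < 2*(j+1)^2" "0 < j" using j by auto
    show ?thesis using h p by (simp add: divide_simps)
  qed
  ultimately show ?thesis by linarith
qed



definition JJ :: "nat \<Rightarrow> nat" where "JJ k = 2^(Suc k) - 1"

lemma JJ_ge: "Suc k \<le> JJ k"
  using less_exp[of "Suc k"] by (simp add: JJ_def)

lemma JJ_Suc: "JJ (Suc k) = Suc (2 * JJ k)"
proof -
  obtain m where m: "(2::nat)^Suc k = Suc m" using not0_implies_Suc[of "(2::nat)^Suc k"] by auto
  have "(2::nat)^Suc (Suc k) = 2 * 2^Suc k" by simp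
  then show ?thesis unfolding JJ_def using m by simp
qed

lemma pow4: "(4::'a::comm_semiring_1)^n = (2^n)^2"
proof -
  have "(2::'a)^n * 2^n = (2*2)^n" by (rule power_mult_distrib[symmetric])
  then show ?thesis by (simp add: power2_eq_square)
qed

lemma spr_JJ: "3 * spr (JJ k) = JJ k ^ 2 + 2 * JJ k"
proof -
  have h: "3 * spr (JJ k) + 1 = 4^(Suc k)" unfolding JJ_def by (rule spr_pow1)
  have a: "(4::nat)^(Suc k) = (2^Suc k)^2" by (rule pow4)
  have b: "(2::nat)^Suc k = JJ k + 1" unfolding JJ_def by simp
  have "3 * spr (JJ k) + 1 = (2^Suc k)^2" by (rule trans[OF h a])
  also have "\<dots> = (JJ k + 1)^2" by (simp only: b)
  finally have "3 * spr (JJ k) + 1 = (JJ k + 1)^2" .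
  then show ?thesis by (simp add: power2_eq_square algebra_simps)
qed



lemma odd_bnd: fixes n i s an isq nsq :: nat
 assumes "isq + 4*i + 3 \<le> 3 * s" "s \<le> isq + 2*i + 1" "1 \<le> s" "nsq = 4 * isq + 4 * i + 1"
   "an + 1 = 2 * s" "n = Suc (2 * i)"
 shows "nsq \<le> 6 * an \<and> 2 * an \<le> nsq + 2 * n"
  using assms by (intro conjI; linarith)

theorem mainTheorem10:
  fixes G :: "bit fps" and a :: "nat \<Rightarrow> nat"
  assumes G0: "fps_nth G 0 = 0"
    and inv1: "fps_compose TM_F G = fps_X"
    and inv2: "fps_compose G TM_F = fps_X"
    and a_def: "\<And>n. a n = (if n = 0 then 0
                  else enumerate {m. m \<ge> 1 \<and> fps_nth G m = 1} (n - 1))"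
  shows "infinite {m. m \<ge> 1 \<and> fps_nth G m = 1}
    \<and> liminf (\<lambda>n. ereal (real (a n) / real n ^ 2)) = ereal (1/6)
    \<and> limsup (\<lambda>n. ereal (real (a n) / real n ^ 2)) = ereal (1/2)
    \<and> {1/6 .. 1/2} \<subseteq> closure {real (a n) / real n ^ 2 | n. n \<ge> 1}"
proof -
  define S where "S = {m. m \<ge> 1 \<and> fps_nth G m = 1}"
  have S_eq: "S = range fe"
    unfolding S_def fe_range[symmetric] using G_char[OF G0 inv1] by auto
  have infS: "infinite S" by (rule enumerate_eq_strict_mono(1)[OF fe_mono S_eq])
  have enum: "\<And>k. enumerate S k = fe k" by (rule enumerate_eq_strict_mono(2)[OF fe_mono S_eq])
  have a_pos: "\<And>n. n \<ge> 1 \<Longrightarrow> a n = fe (n - 1)" using a_def enum unfolding S_def by simp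
  have a_even: "\<And>j. j \<ge> 1 \<Longrightarrow> a (2*j) = 2 * spr j"
  proof -
    fix j :: nat assume j: "j \<ge> 1"
    then have "2*j - 1 = Suc (2*(j-1))" by simp
    then have "a (2*j) = fe (Suc (2*(j-1)))" using a_pos[of "2*j"] j by simp
    also have "\<dots> = 2 * spr j" using fe_odd[of "j-1"] j by simp
    finally show "a (2*j) = 2 * spr j" .
  qed
  have a_oddS: "\<And>i. a (Suc (2*i)) = 2 * spr (Suc i) - 1"
    using a_pos fe_even by simp
  define r where "r = (\<lambda>n. real (a n) / real n ^ 2)"
  have r_even: "\<And>j. j \<ge> 1 \<Longrightarrow> r (2*j) = real (spr j) / (2 * real j ^ 2)"
    using a_even by (simp add: r_def power2_eq_square)
  have bnds: "\<And>n. n \<ge> 1 \<Longrightarrow> n^2 \<le> 6 * a n \<and> 2 * a n \<le> n^2 + 2*n"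
  proof -
    fix n :: nat assume n: "n \<ge> 1"
    have "\<exists>i. n = 2*i \<or> n = Suc (2*i)" by presburger
    then obtain i where "n = 2*i \<or> n = Suc (2*i)" by blast
    then show "n^2 \<le> 6 * a n \<and> 2 * a n \<le> n^2 + 2*n"
    proof
      assume ni: "n = 2*i"
      then have i: "i \<ge> 1" using n by simp
      have an: "a n = 2 * spr i" using a_even[OF i] ni by simp
      have "i^2 + 2*i \<le> 3 * spr i" "spr i \<le> i^2" by (rule spr_ge, rule spr_le)
      moreover have "n^2 = 4 * i^2" using ni by (simp add: power2_eq_square)
      ultimately show ?thesis using an by (intro conjI; linarith)
    next
      assume ni: "n = Suc (2*i)"
      have an: "a n = 2 * spr (Suc i) - 1" using a_oddS ni by simp
      have sq: "(Suc i)^2 = i^2 + 2*i + 1" by (simp add: power2_eq_square algebra_simps)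
      have h1: "i^2 + 4*i + 3 \<le> 3 * spr (Suc i)" using spr_ge[of "Suc i"] unfolding sq by presburger
      have h2: "spr (Suc i) \<le> i^2 + 2*i + 1" using spr_le[of "Suc i"] unfolding sq .
      have h3: "spr (Suc i) \<ge> 1" by (rule spr_pos) simp
      have h4: "n^2 = 4 * i^2 + 4 * i + 1" using ni by (simp add: power2_eq_square algebra_simps)
      have h5: "a n + 1 = 2 * spr (Suc i)" using an h3 by simp
      show ?thesis by (rule odd_bnd[OF h1 h2 h3 h4 h5 ni])
    qed
  qed
  have r_lo: "\<And>n. n \<ge> 1 \<Longrightarrow> 1/6 \<le> r n"
  proof -
    fix n :: nat assume n: "n \<ge> 1"
    have "real (n^2) \<le> real (6 * a n)" using bnds[OF n] by linarith
    then have h: "real n ^ 2 \<le> 6 * real (a n)" by simp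
    have p: "0 < real n ^ 2" using n by simp
    show "1/6 \<le> r n" unfolding r_def using h p by (simp add: divide_simps)
  qed
  have r_hi: "\<And>n. n \<ge> 1 \<Longrightarrow> r n \<le> 1/2 + 1 / real n"
  proof -
    fix n :: nat assume n: "n \<ge> 1"
    have "real (2 * a n) \<le> real (n^2 + 2*n)" using bnds[OF n] by linarith
    then have h: "2 * real (a n) \<le> real n ^ 2 + 2 * real n" by simp
    have p: "0 < real n" using n by simp
    show "r n \<le> 1/2 + 1 / real n" unfolding r_def using h p
      by (simp add: divide_simps power2_eq_square) (simp add: algebra_simps)
  qed
  have rJ: "\<And>k. r (2 * JJ k) = 1/6 + 1 / (3 * real (JJ k))"
  proof -
    fix k
    have J1: "JJ k \<ge> 1" using JJ_ge[of k] by simp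
    have e: "3 * real (spr (JJ k)) = real (JJ k) ^ 2 + 2 * real (JJ k)"
      using spr_JJ[of k] by (metis of_nat_add of_nat_mult of_nat_numeral of_nat_power)
    have p: "real (JJ k) > 0" using J1 by simp
    have "r (2 * JJ k) = real (spr (JJ k)) / (2 * real (JJ k) ^ 2)" by (rule r_even[OF J1])
    also have "\<dots> = (real (JJ k) ^ 2 + 2 * real (JJ k)) / (6 * real (JJ k) ^ 2)"
      using e p by (simp add: divide_simps)
    also have "\<dots> = 1/6 + 1 / (3 * real (JJ k))"
      using p by (simp add: divide_simps power2_eq_square) (simp add: algebra_simps)
    finally show "r (2 * JJ k) = 1/6 + 1 / (3 * real (JJ k))" .
  qed
  have rP: "\<And>k. r (2 * 2^k) = 1/2"
  proof -
    fix k :: nat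
    have "r (2 * 2^k) = real (spr (2^k)) / (2 * real (2^k) ^ 2)" by (rule r_even) simp
    also have "\<dots> = 1/2" by (simp add: spr_pow pow4[where 'a=real])
    finally show "r (2 * 2^k) = 1/2" .
  qed
  have li1: "ereal (1/6) \<le> liminf (\<lambda>n. ereal (r n))"
  proof -
    have "liminf (\<lambda>n. ereal (1/6)) \<le> liminf (\<lambda>n. ereal (r n))"
      by (rule Liminf_mono) (use r_lo in \<open>auto simp: eventually_sequentially\<close>)
    then show ?thesis by (simp add: Liminf_const)
  qed
  have li2: "liminf (\<lambda>n. ereal (r n)) \<le> ereal (1/6)"
  proof -
    have sm: "strict_mono (\<lambda>k. 2 * JJ k)"
      by (rule strict_mono_Suc_iff[THEN iffD2]) (simp add: JJ_Suc)
    have lim0: "(\<lambda>k. 1 / (3 * real (JJ k))) \<longlonglongrightarrow> 0"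
    proof (rule tendsto_sandwich[of "\<lambda>_. 0" _ _ "\<lambda>k. inverse (real (Suc k))"])
      show "\<forall>\<^sub>F k in sequentially. 0 \<le> 1 / (3 * real (JJ k))" by simp
      show "\<forall>\<^sub>F k in sequentially. 1 / (3 * real (JJ k)) \<le> inverse (real (Suc k))"
      proof (rule always_eventually, rule allI)
        fix k
        have "real (Suc k) \<le> real (JJ k)" using JJ_ge[of k] by linarith
        then show "1 / (3 * real (JJ k)) \<le> inverse (real (Suc k))"
          by (simp add: divide_simps)
      qed
    qed (rule tendsto_const, rule LIMSEQ_inverse_real_of_nat)
    have "((\<lambda>n. ereal (r n)) \<circ> (\<lambda>k. 2 * JJ k)) \<longlonglongrightarrow> ereal (1/6)"
      unfolding comp_def rJ
      using tendsto_add[OF tendsto_const[of "1/6::real"] lim0] by (intro tendsto_ereal) simp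
    then have "liminf ((\<lambda>n. ereal (r n)) \<circ> (\<lambda>k. 2 * JJ k)) = ereal (1/6)"
      by (intro lim_imp_Liminf) simp_all
    with liminf_subseq_mono[OF sm, of "\<lambda>n. ereal (r n)"] show ?thesis by simp
  qed
  have ls1: "limsup (\<lambda>n. ereal (r n)) \<le> ereal (1/2)"
  proof -
    have "limsup (\<lambda>n. ereal (r n)) \<le> limsup (\<lambda>n. ereal (1/2 + 1 / real n))"
      by (rule Limsup_mono) (use r_hi in \<open>auto simp: eventually_sequentially\<close>)
    moreover have t: "(\<lambda>n. 1/2 + 1 / real n) \<longlonglongrightarrow> 1/2"
      using tendsto_add[OF tendsto_const[of "1/2::real"] lim_1_over_n] by simp
    then have "limsup (\<lambda>n. ereal (1/2 + 1 / real n)) = ereal (1/2)"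
      by (intro lim_imp_Limsup tendsto_ereal) simp_all
    ultimately show ?thesis by simp
  qed
  have ls2: "ereal (1/2) \<le> limsup (\<lambda>n. ereal (r n))"
  proof -
    have sm: "strict_mono (\<lambda>k. 2 * 2 ^ k :: nat)"
      by (rule strict_mono_Suc_iff[THEN iffD2]) simp
    have "limsup ((\<lambda>n. ereal (r n)) \<circ> (\<lambda>k. 2 * 2^k)) = ereal (1/2)"
      unfolding comp_def rP by (simp add: Limsup_const)
    with limsup_subseq_mono[OF sm, of "\<lambda>n. ereal (r n)"] show ?thesis by simp
  qed
  have dense: "{1/6 .. 1/2} \<subseteq> closure {r n | n. n \<ge> 1}"
  proof
    fix x :: real assume x: "x \<in> {1/6 .. 1/2}"
    show "x \<in> closure {r n | n. n \<ge> 1}"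
    proof (rule closure_approachable[THEN iffD2], intro allI impI)
      fix e :: real assume e: "e > 0"
      obtain L where L: "1/e < 2^L" using real_arch_pow[of 2 "1/e"] by auto
      define K :: nat where "K = 2^L"
      have K1: "K \<ge> 1" unfolding K_def by simp
      have Ke: "1 / real K < e" using L e unfolding K_def by (simp add: divide_simps mult.commute)
      define yy where "yy = (\<lambda>i. r (2 * (K + i)))"
      have yy0: "yy 0 \<ge> x" using x unfolding yy_def K_def using rP[of L] by simp
      have yst: "\<And>i. i < K - 1 \<Longrightarrow> yy (Suc i) \<ge> yy i - 1 / real K"
      proof -
        fix i
        let ?j = "real (K + i)"
        have j1: "1 \<le> ?j" using K1 by simp
        have s0: "0 \<le> real (spr (K + i))" by simp
        have sj: "real (spr (K + i)) \<le> ?j ^ 2" using spr_le[of "K+i"] by (metis of_nat_le_iff of_nat_power)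
        have ss: "real (spr (K + i)) \<le> real (spr (K + Suc i))"
          using spr_mono[of "K+i" "K + Suc i"] by simp
        have "real (spr (K + i)) / (2 * ?j^2) - real (spr (K + Suc i)) / (2 * (?j + 1)^2) \<le> 1 / ?j"
          by (rule step_ineq[OF j1 s0 sj ss])
        moreover have "1 / ?j \<le> 1 / real K" using K1 by (simp add: divide_simps)
        moreover have "yy i = real (spr (K + i)) / (2 * ?j^2)"
          unfolding yy_def using r_even[of "K+i"] K1 by simp
        moreover have "yy (Suc i) = real (spr (K + Suc i)) / (2 * (?j + 1)^2)"
          unfolding yy_def using r_even[of "K + Suc i"] K1 by simp
        ultimately show "yy (Suc i) \<ge> yy i - 1 / real K" by linarith
      qed
      have yN: "yy (K - 1) \<le> x + 1 / real K"
      proof -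
        have "K + (K - 1) = JJ L" unfolding JJ_def K_def by simp
        then have "yy (K - 1) = 1/6 + 1 / (3 * real (JJ L))" unfolding yy_def using rJ[of L] by simp
        moreover have "real K \<le> real (JJ L)" unfolding JJ_def K_def by simp
        then have "1 / (3 * real (JJ L)) \<le> 1 / real K" using K1 by (simp add: divide_simps)
        ultimately show ?thesis using x by simp
      qed
      obtain i where i: "i \<le> K - 1" "\<bar>yy i - x\<bar> \<le> 1 / real K"
        using dIVT[of x yy "K - 1" "1 / real K"] yy0 yst yN by blast
      show "\<exists>y\<in>{r n |n. n \<ge> 1}. dist y x < e"
      proof (intro bexI)
        show "dist (yy i) x < e" using i Ke by (simp add: dist_real_def)
        show "yy i \<in> {r n |n. n \<ge> 1}" unfolding yy_def using K1 by auto
      qed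
    qed
  qed
  show ?thesis
    using infS li1 li2 ls1 ls2 dense unfolding S_def r_def by (auto intro: antisym)
qed


end
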